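(* Let $a,b,\lambda>0$ and $\varepsilon>0$, and let $R=\{z\in\mathbf{C}:|\mathrm{Re}\,z|<a,\ |\mathrm{Im}\,z|<b+\varepsilon\}$. Let $F$ be a subharmonic function on $R$ such that $F(z)<(\min(\mathrm{Re}\,z,0))^2$ for all $z\in R$ and $F(z)<-\lambda$ for all $z\in R$ with $|\mathrm{Im}\,z|\ge b$. Set \[\delta=\min\Big(\frac{\lambda}{2a\cosh(\pi b/a)},\frac{a}{3}\Big).\] Then for all $z$ with $|\mathrm{Im}\,z|<b$ and $|\mathrm{Re}\,z|<\delta/2$, \[F(z)<-\frac{\lambda}{2a\cosh(\pi b/a)}\,\delta.\] *)

theory Defs
  imports "HOL-Analysis.Analysis"
begin

text \<open>Subharmonic functions (values in [-infinity, infinity), modelled as ereal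
  with value +infinity excluded): upper semicontinuous on the open set U and
  satisfying the sub-mean-value inequality on every closed disc contained in U.
  The circle average is the Lebesgue integral, split into positive and
  negative parts (the positive part is finite for usc functions).\<close>

definition usc_on :: "complex set \<Rightarrow> (complex \<Rightarrow> ereal) \<Rightarrow> bool" where
  "usc_on U F \<longleftrightarrow> (\<forall>c::real. openin (top_of_set U) {z\<in>U. F z < ereal c})"

definition circle_pos_part :: "(complex \<Rightarrow> ereal) \<Rightarrow> complex \<Rightarrow> real \<Rightarrow> ennreal" where
  "circle_pos_part F z r =
     (\<integral>\<^sup>+ t. e2ennreal (max 0 (F (z + of_real r * cis t))) * indicator {0..2*pi} t \<partial>lborel)"

definition circle_neg_part :: "(complex \<Rightarrow> ereal) \<Rightarrow> complex \<Rightarrow> real \<Rightarrow> ennreal" where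
  "circle_neg_part F z r =
     (\<integral>\<^sup>+ t. e2ennreal (max 0 (- F (z + of_real r * cis t))) * indicator {0..2*pi} t \<partial>lborel)"

definition subharmonic_on :: "complex set \<Rightarrow> (complex \<Rightarrow> ereal) \<Rightarrow> bool" where
  "subharmonic_on U F \<longleftrightarrow>
     open U \<and> (\<forall>z\<in>U. F z < \<infinity>) \<and> usc_on U F \<and>
     (\<forall>z r. r > 0 \<longrightarrow> cball z r \<subseteq> U \<longrightarrow>
        circle_pos_part F z r < \<infinity> \<and>
        F z \<le> (enn2ereal (circle_pos_part F z r) - enn2ereal (circle_neg_part F z r)) / ereal (2*pi))"

end

theory Submission
  imports Defs "HOL-Complex_Analysis.Complex_Analysis"
begin

lemma mean_value_holo:
  fixes g :: "complex \<Rightarrow> complex" and r :: real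
  assumes hol: "g holomorphic_on UNIV" and r: "r > 0"
  shows "((\<lambda>t. g (c + r * cis t)) has_integral (2*pi*g c)) {0..2*pi}"
proof -
  have "((\<lambda>u. g u/(u-c)) has_contour_integral (2 * of_real pi * \<i> * g c)) (circlepath c r)"
    by (rule Cauchy_integral_circlepath)
       (use hol r in \<open>auto intro: holomorphic_on_imp_continuous_on holomorphic_on_subset\<close>)
  hence "((\<lambda>t. g (c + r * cis t) / (c + r * cis t - c) * r * \<i> * cis t) has_integral (2 * of_real pi * \<i> * g c)) {0..2*pi}"
    unfolding circlepath_def by (subst (asm) has_contour_integral_part_circlepath_iff) auto
  moreover have "\<And>t. g (c + r * cis t) / (c + r * cis t - c) * r * \<i> * cis t = \<i> * g (c + r * cis t)"
    using r by (simp add: field_simps)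
  ultimately have "((\<lambda>t. \<i> * g (c + r * cis t)) has_integral (\<i> * (2*pi*g c))) {0..2*pi}"
    by (simp add: algebra_simps)
  from has_integral_mult_right[OF this, of "-\<i>"] show ?thesis by simp
qed

lemma mean_value_Re:
  fixes g :: "complex \<Rightarrow> complex" and r :: real
  assumes hol: "g holomorphic_on UNIV" and r: "r > 0"
  shows "((\<lambda>t. Re (g (c + r * cis t))) has_integral (2*pi*Re (g c))) {0..2*pi}"
  using has_integral_linear[OF mean_value_holo[OF hol r] bounded_linear_Re, of c]
  by (simp add: o_def)

lemma mean_value_norm2:
  fixes c :: complex and r :: real
  assumes r: "r > 0"
  shows "((\<lambda>t. (cmod (c + r * cis t))^2) has_integral (2*pi*((cmod c)^2 + r^2))) {0..2*pi}"
proof -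
  have h: "((\<lambda>t. Re (cnj c * (c + r * cis t))) has_integral (2*pi*Re (cnj c * c))) {0..2*pi}"
    by (rule mean_value_Re[OF _ r]) (auto intro!: holomorphic_intros)
  have e: "(cmod (c + r * cis t))^2 = 2 * Re (cnj c * (c + r * cis t)) - (cmod c)^2 + r^2" for t
  proof -
    have "(cmod (c + r * cis t))^2 = (Re c + r * cos t)^2 + (Im c + r * sin t)^2"
      by (simp add: cmod_power2)
    also have "\<dots> = (Re c)^2 + (Im c)^2 + r^2 * ((sin t)^2 + (cos t)^2) + 2*r*(Re c * cos t + Im c * sin t)"
      by (simp add: power2_eq_square algebra_simps)
         (metis distrib_left mult_1_right power2_eq_square sin_cos_squared_add add.commute)
    also have "\<dots> = 2 * Re (cnj c * (c + r * cis t)) - (cmod c)^2 + r^2"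
      by (simp only: sin_cos_squared_add) (simp add: cmod_power2 algebra_simps, simp add: power2_eq_square)
    finally show ?thesis .
  qed
  have cst: "((\<lambda>x. C) has_integral (2*pi*C)) {0..2*pi}" for C :: real
    using has_integral_const_real[of C 0 "2*pi"] by (simp add: mult.commute)
  have I: "((\<lambda>t. 2 * Re (cnj c * (c + r * cis t)) - (cmod c)^2 + r^2) has_integral
          (2 * (2*pi*Re (cnj c * c)) - 2*pi*(cmod c)^2 + 2*pi*r^2)) {0..2*pi}"
    by (intro has_integral_add has_integral_diff has_integral_mult_right h)
       (auto intro: cst)
  have re: "Re (cnj c * c) = (cmod c)^2" by (simp add: cmod_power2, simp add: power2_eq_square)
  have V: "2 * (2*pi*Re (cnj c * c)) - 2*pi*(cmod c)^2 + 2*pi*r^2 = 2*pi*((cmod c)^2 + r^2)"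
    unfolding re by (simp add: algebra_simps)
  show ?thesis unfolding e using I[unfolded V] .
qed

lemma avg_le:
  fixes F :: "complex \<Rightarrow> ereal" and w :: "real \<Rightarrow> real" and r :: real
  assumes cw: "continuous_on {0..2*pi} w"
   and le: "\<And>t. t \<in> {0..2*pi} \<Longrightarrow> F (c + of_real r * cis t) \<le> ereal (w t)"
   and W: "(w has_integral W) {0..2*pi}"
  shows "(enn2ereal (circle_pos_part F c r) - enn2ereal (circle_neg_part F c r)) / ereal (2*pi) \<le> ereal (W / (2*pi))"
proof -
  have cp: "continuous_on {0..2*pi} (\<lambda>t. max 0 (w t))" and cn: "continuous_on {0..2*pi} (\<lambda>t. max 0 (- w t))"
    by (auto intro!: continuous_intros cw)
  obtain Wp where Wp: "((\<lambda>t. max 0 (w t)) has_integral Wp) {0..2*pi}"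
    using integrable_continuous_interval[OF cp] by blast
  obtain Wn where Wn: "((\<lambda>t. max 0 (- w t)) has_integral Wn) {0..2*pi}"
    using integrable_continuous_interval[OF cn] by blast
  have "((\<lambda>t. max 0 (w t) - max 0 (- w t)) has_integral (Wp - Wn)) {0..2*pi}"
    by (rule has_integral_diff[OF Wp Wn])
  moreover have "(\<lambda>t. max 0 (w t) - max 0 (- w t)) = w" by (auto simp: fun_eq_iff)
  ultimately have WW: "W = Wp - Wn" using W has_integral_unique by metis
  have Wp0: "Wp \<ge> 0" by (rule has_integral_nonneg[OF Wp]) auto
  have Wn0: "Wn \<ge> 0" by (rule has_integral_nonneg[OF Wn]) auto
  have ip: "integral\<^sup>N lborel (\<lambda>t. indicator {0..2*pi} t * max 0 (w t)) = Wp"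
    by (rule nn_integral_has_integral_lebesgue[OF _ Wp]) auto
  have in': "integral\<^sup>N lborel (\<lambda>t. indicator {0..2*pi} t * max 0 (- w t)) = Wn"
    by (rule nn_integral_has_integral_lebesgue[OF _ Wn]) auto
  have "circle_pos_part F c r \<le> integral\<^sup>N lborel (\<lambda>t. indicator {0..2*pi} t * max 0 (w t))"
    unfolding circle_pos_part_def
  proof (rule nn_integral_mono)
    fix t
    show "e2ennreal (max 0 (F (c + of_real r * cis t))) * indicator {0..2*pi} t
          \<le> ennreal (indicator {0..2*pi} t * max 0 (w t))"
    proof (cases "t \<in> {0..2*pi}")
      case True
      have X: "max 0 (F (c + of_real r * cis t)) \<le> ereal (max 0 (w t))"
      proof -
        have "max 0 (F (c + of_real r * cis t)) \<le> max 0 (ereal (w t))"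
          by (rule max.mono[OF order_refl le[OF True]])
        also have "\<dots> = ereal (max 0 (w t))" by (cases "w t \<ge> 0") (auto simp: max_def)
        finally show ?thesis .
      qed
      have "e2ennreal (max 0 (F (c + of_real r * cis t))) \<le> ennreal (max 0 (w t))"
        using e2ennreal_mono[OF X] by (simp only: e2ennreal_ereal)
      then show ?thesis using True by simp
    qed simp
  qed
  hence P: "enn2ereal (circle_pos_part F c r) \<le> ereal Wp"
    using ip Wp0 by (metis enn2ereal_ennreal less_eq_ennreal.rep_eq)
  have "integral\<^sup>N lborel (\<lambda>t. indicator {0..2*pi} t * max 0 (- w t)) \<le> circle_neg_part F c r"
    unfolding circle_neg_part_def
  proof (rule nn_integral_mono)
    fix t
    show "ennreal (indicator {0..2*pi} t * max 0 (- w t)) \<le>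
          e2ennreal (max 0 (- F (c + of_real r * cis t))) * indicator {0..2*pi} t"
    proof (cases "t \<in> {0..2*pi}")
      case True
      have X: "ereal (max 0 (- w t)) \<le> max 0 (- F (c + of_real r * cis t))"
      proof -
        have "ereal (- w t) \<le> - F (c + of_real r * cis t)"
          using le[OF True] by (cases "F (c + of_real r * cis t)") auto
        hence "max 0 (ereal (- w t)) \<le> max 0 (- F (c + of_real r * cis t))"
          by (rule max.mono[OF order_refl])
        moreover have "max 0 (ereal (- w t)) = ereal (max 0 (- w t))" by (cases "w t \<le> 0") (auto simp: max_def)
        ultimately show ?thesis by simp
      qed
      have "ennreal (max 0 (- w t)) \<le> e2ennreal (max 0 (- F (c + of_real r * cis t)))"
        using e2ennreal_mono[OF X] by (simp only: e2ennreal_ereal)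
      then show ?thesis using True by simp
    qed simp
  qed
  hence N: "ereal Wn \<le> enn2ereal (circle_neg_part F c r)"
    using in' Wn0 by (metis enn2ereal_ennreal less_eq_ennreal.rep_eq)
  have "enn2ereal (circle_pos_part F c r) - enn2ereal (circle_neg_part F c r) \<le> ereal Wp - ereal Wn"
    by (rule ereal_minus_mono[OF P N])
  also have "\<dots> = ereal W" using WW by simp
  finally have "(enn2ereal (circle_pos_part F c r) - enn2ereal (circle_neg_part F c r)) / ereal (2*pi) \<le> ereal W / ereal (2*pi)"
    by (intro ereal_divide_right_mono) auto
  also have "\<dots> = ereal (W / (2*pi))" by simp
  finally show ?thesis .
qed

lemma usc_add_cont:
  fixes G :: "complex \<Rightarrow> ereal" and phi :: "complex \<Rightarrow> real"
  assumes "usc_on U G" "continuous_on U phi"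
  shows "usc_on U (\<lambda>z. G z + ereal (phi z))"
  unfolding usc_on_def
proof
  fix c :: real
  have eq: "{z\<in>U. G z + ereal (phi z) < ereal c} = (\<Union>q. {z\<in>U. G z < ereal q} \<inter> (U \<inter> phi -` {..<c - q}))"
  proof (rule set_eqI, rule iffI)
    fix z assume z: "z \<in> {z\<in>U. G z + ereal (phi z) < ereal c}"
    hence "G z < ereal (c - phi z)" by (cases "G z") auto
    then obtain q where "G z < ereal q" "ereal q < ereal (c - phi z)" using ereal_dense2 by blast
    thus "z \<in> (\<Union>q. {z\<in>U. G z < ereal q} \<inter> (U \<inter> phi -` {..<c - q}))" using z by auto
  next
    fix z assume "z \<in> (\<Union>q. {z\<in>U. G z < ereal q} \<inter> (U \<inter> phi -` {..<c - q}))"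
    then obtain q where "z \<in> U" "G z < ereal q" "phi z < c - q" by auto
    thus "z \<in> {z\<in>U. G z + ereal (phi z) < ereal c}" by (cases "G z") auto
  qed
  show "openin (top_of_set U) {z\<in>U. G z + ereal (phi z) < ereal c}"
    unfolding eq
    using assms(1) continuous_openin_preimage_gen[OF assms(2) open_lessThan]
    unfolding usc_on_def by (intro openin_Union) auto
qed

lemma usc_max:
  fixes G :: "complex \<Rightarrow> ereal"
  assumes usc: "usc_on U G" and K: "compact K" "K \<subseteq> U" "K \<noteq> {}"
  shows "\<exists>p\<in>K. \<forall>z\<in>K. G z \<le> G p"
proof (rule ccontr)
  assume na: "\<not> ?thesis"
  define O' where "O' c = (SOME T. open T \<and> {z\<in>U. G z < ereal c} = U \<inter> T)" for c
  have O': "open (O' c) \<and> {z\<in>U. G z < ereal c} = U \<inter> O' c" for c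
    unfolding O'_def by (rule someI_ex) (use usc in \<open>auto simp: usc_on_def openin_open\<close>)
  define C where "C = {c. \<exists>z\<in>K. ereal c < G z}"
  have cov: "K \<subseteq> (\<Union>c\<in>C. O' c)"
  proof
    fix p assume p: "p \<in> K"
    then obtain z where z: "z \<in> K" "G p < G z" using na by (meson not_le)
    then obtain c where c: "G p < ereal c" "ereal c < G z" using ereal_dense2 by blast
    have "p \<in> {z\<in>U. G z < ereal c}" using p K c by auto
    hence "p \<in> O' c" using O'[of c] by auto
    moreover have "c \<in> C" using z c unfolding C_def by auto
    ultimately show "p \<in> (\<Union>c\<in>C. O' c)" by auto
  qed
  obtain C' where C': "C' \<subseteq> C" "finite C'" "K \<subseteq> (\<Union>c\<in>C'. O' c)"
    by (rule compactE_image[OF K(1) _ cov]) (use O' in auto)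
  have "C' \<noteq> {}" using C' K(3) by auto
  define zc where "zc c = (SOME z. z \<in> K \<and> ereal c < G z)" for c
  have zc: "zc c \<in> K \<and> ereal c < G (zc c)" if "c \<in> C'" for c
    unfolding zc_def by (rule someI_ex) (use that C' in \<open>auto simp: C_def\<close>)
  have fin: "finite (G ` zc ` C')" and ne: "G ` zc ` C' \<noteq> {}" using C' \<open>C' \<noteq> {}\<close> by auto
  obtain c0 where c0: "c0 \<in> C'" "G (zc c0) = Max (G ` zc ` C')"
    using Max_in[OF fin ne] by auto
  have "zc c0 \<in> K" using zc[OF c0(1)] by auto
  then obtain c1 where c1: "c1 \<in> C'" "zc c0 \<in> O' c1" using C' by auto
  have "G (zc c0) < ereal c1" using O'[of c1] c1 \<open>zc c0 \<in> K\<close> K(2) by auto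
  also have "\<dots> < G (zc c1)" using zc[OF c1(1)] by auto
  also have "\<dots> \<le> G (zc c0)" unfolding c0(2) using fin c1(1) by (intro Max_ge) auto
  finally show False by simp
qed

lemma sin_lower:
  fixes u :: real assumes "0 < u" "u \<le> 1/3"
  shows "sin (pi/2 * u) \<ge> u"
proof -
  let ?t = "pi/2 * u"
  have sumeq: "(\<Sum>m<3. sin_coeff m * ?t ^ m) = ?t"
    by (simp add: numeral_3_eq_3 sin_coeff_def)
  have b: "\<bar>sin ?t - ?t\<bar> \<le> inverse (fact 3) * \<bar>?t\<bar> ^ 3"
    using Maclaurin_sin_bound[of ?t 3] unfolding sumeq .
  have f3: "inverse (fact 3 :: real) = 1/6" by (simp add: fact_numeral)
  have "\<bar>?t\<bar> = ?t" using assms by simp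
  hence "\<bar>sin ?t - ?t\<bar> \<le> ?t^3/6" using b f3 by simp
  hence s: "sin ?t \<ge> ?t - ?t^3/6" by linarith
  have p3: "pi^3 \<le> 4^3" using power_mono[of pi 4 3] pi_less_4 by simp
  have u2: "u^2 \<le> (1/3)^2" using power_mono[of u "1/3" 2] assms by simp
  have q: "pi^3 * u^2 \<le> 4^3 * (1/3)^2"
    by (rule mult_mono[OF p3 u2]) auto
  have e: "?t - ?t^3/6 = u * (pi/2 - pi^3 * u^2 / 48)" by (simp add: power3_eq_cube power2_eq_square field_simps)
  have n: "(4::real)^3 * (1/3)^2 = 64/9" by (simp add: power2_eq_square)
  have "pi/2 - pi^3 * u^2 / 48 \<ge> 1" using pi_gt3 q unfolding n by linarith
  hence "u * (pi/2 - pi^3 * u^2 / 48) \<ge> u" using assms by (simp add: mult_le_cancel_left1)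
  thus ?thesis using s e by linarith
qed

lemma ereal_add_lt0:
  fixes X :: ereal assumes "X < ereal B" "phi \<le> - B"
  shows "X + ereal phi < 0"
  using assms by (cases X) auto

theorem lemma2p6:
  fixes a b lam eps :: real and F :: "complex \<Rightarrow> ereal"
  assumes "a > 0" and "b > 0" and "lam > 0" and "eps > 0"
    and "subharmonic_on {z. \<bar>Re z\<bar> < a \<and> \<bar>Im z\<bar> < b + eps} F"
    and "\<And>z. \<bar>Re z\<bar> < a \<Longrightarrow> \<bar>Im z\<bar> < b + eps \<Longrightarrow> F z < ereal ((min (Re z) 0)^2)"
    and "\<And>z. \<bar>Re z\<bar> < a \<Longrightarrow> \<bar>Im z\<bar> < b + eps \<Longrightarrow> \<bar>Im z\<bar> \<ge> b \<Longrightarrow> F z < ereal (- lam)"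
  shows "\<forall>z. \<bar>Im z\<bar> < b \<longrightarrow> \<bar>Re z\<bar> < min (lam / (2 * a * cosh (pi * b / a))) (a / 3) / 2 \<longrightarrow>
           F z < ereal (- (lam / (2 * a * cosh (pi * b / a))) * min (lam / (2 * a * cosh (pi * b / a))) (a / 3))"
proof -
  note a = assms(1) and b = assms(2) and lam = assms(3) and eps = assms(4)
  define R where "R = {z. \<bar>Re z\<bar> < a \<and> \<bar>Im z\<bar> < b + eps}"
  have sub: "subharmonic_on R F" using assms(5) unfolding R_def .
  have F1: "F z < ereal ((min (Re z) 0)^2)" if "z \<in> R" for z using assms(6) that unfolding R_def by auto
  have F2: "F z < ereal (- lam)" if "z \<in> R" "\<bar>Im z\<bar> \<ge> b" for z using assms(7) that unfolding R_def by auto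
  define ch where "ch = cosh (pi * b / a)"
  have ch: "ch \<ge> 1" unfolding ch_def by (rule cosh_real_ge_1)
  define c0 where "c0 = lam / (2 * a * ch)"
  define d where "d = min c0 (a/3)"
  have c0: "c0 > 0" unfolding c0_def using a lam ch by simp
  have d0: "d > 0" and dc: "d \<le> c0" and da: "d \<le> a/3" unfolding d_def using c0 a by auto
  define k where "k = pi / a"
  define m where "m = a/2 - d"
  define A where "A = lam / ch"
  define s where "s = d^3 / (4*a)"
  define eta where "eta = s / (a^2 + b^2)"
  define x1 where "x1 = - d"
  define x2 where "x2 = a - d"
  have A2: "A = 2 * a * c0" unfolding A_def c0_def using a ch by (simp add: field_simps)
  have s0: "s > 0" unfolding s_def using d0 a by simp
  have eta0: "eta > 0" unfolding eta_def using s0 a b by (simp add: add_pos_pos)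
  define g :: "complex \<Rightarrow> complex" where "g z = - of_real A * cos (of_real k * (z - of_real m)) + of_real s + of_real (d^2/a) * (of_real x2 - z)" for z
  define v :: "complex \<Rightarrow> real" where "v z = - A * cos (k * (Re z - m)) * cosh (k * Im z) + s + d^2/a * (x2 - Re z)" for z
  have vg: "v z = Re (g z)" for z
    unfolding v_def g_def by (simp add: Re_cos cosh_field_def)
  have hol: "g holomorphic_on UNIV" unfolding g_def by (intro holomorphic_intros)
  define phi :: "complex \<Rightarrow> real" where "phi z = eta * (cmod z)^2 - v z" for z
  define G where "G z = F z + ereal (phi z)" for z
  define K where "K = {z. x1 \<le> Re z \<and> Re z \<le> x2 \<and> \<bar>Im z\<bar> \<le> b}"
  have KR: "K \<subseteq> R" unfolding K_def R_def x1_def x2_def using da d0 a eps by auto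
  have normK: "eta * (cmod z)^2 \<le> s" if "z \<in> K" for z
  proof -
    have "\<bar>Re z\<bar> \<le> a" "\<bar>Im z\<bar> \<le> b" using that da d0 unfolding K_def x1_def x2_def by auto
    hence "(Re z)^2 \<le> a^2" "(Im z)^2 \<le> b^2" by (metis abs_ge_zero power2_abs power_mono)+
    hence "(cmod z)^2 \<le> a^2 + b^2" by (simp add: cmod_power2)
    hence "eta * (cmod z)^2 \<le> eta * (a^2 + b^2)" using eta0 by simp
    also have "\<dots> = s" unfolding eta_def using a by simp
    finally show ?thesis .
  qed
  have closedK: "closed K" unfolding K_def
    by (intro closed_Collect_conj closed_Collect_le continuous_intros)
  have boundedK: "bounded K"
  proof -
    have "K \<subseteq> cball 0 (a + b)"
    proof
      fix z assume z: "z \<in> K"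
      have "\<bar>Re z\<bar> \<le> a" "\<bar>Im z\<bar> \<le> b" using z da d0 unfolding K_def x1_def x2_def by auto
      hence "cmod z \<le> a + b" using cmod_le[of z] by simp
      thus "z \<in> cball 0 (a + b)" by simp
    qed
    thus ?thesis using bounded_cball bounded_subset by blast
  qed
  have compK: "compact K" using closedK boundedK by (simp add: compact_eq_bounded_closed)
  have K0: "0 \<in> K" unfolding K_def x1_def x2_def using d0 da b by auto
  have contv: "continuous_on UNIV v" unfolding v_def by (intro continuous_intros)
  have uscG: "usc_on R G" unfolding G_def
    by (rule usc_add_cont) (use sub contv in \<open>auto simp: subharmonic_on_def phi_def intro!: continuous_intros elim: continuous_on_subset\<close>)
  have bd: "G z < 0" if z: "z \<in> K" "\<not> (x1 < Re z \<and> Re z < x2 \<and> \<bar>Im z\<bar> < b)" for z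
  proof -
    have zR: "z \<in> R" using z KR by auto
    have nk: "eta * (cmod z)^2 \<le> s" using normK z by auto
    have zK: "x1 \<le> Re z" "Re z \<le> x2" "\<bar>Im z\<bar> \<le> b" using z unfolding K_def by auto
    consider "\<bar>Im z\<bar> \<ge> b" | "Re z \<le> x1" | "Re z \<ge> x2" using z(2) by linarith
    then show ?thesis
    proof cases
      case 1
      have "\<bar>Im z\<bar> = b" using 1 zK by simp
      hence kb: "\<bar>k * Im z\<bar> = pi * b / a" unfolding k_def using a by (simp add: abs_mult)
      have "cosh (k * Im z) = cosh (\<bar>k * Im z\<bar>)" by simp
      hence "cosh (k * Im z) = ch" unfolding ch_def kb .
      hence "v z = - lam * cos (k * (Re z - m)) + s + d^2/a * (x2 - Re z)"
        unfolding v_def A_def using ch by simp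
      moreover have "- lam * cos (k * (Re z - m)) \<ge> - lam" using lam cos_le_one by simp
      moreover have "d^2/a * (x2 - Re z) \<ge> 0" using zK a by simp
      ultimately have "v z \<ge> - lam + s" by linarith
      hence "phi z \<le> - (- lam)" unfolding phi_def using nk by linarith
      thus ?thesis unfolding G_def by (rule ereal_add_lt0[OF F2[OF zR 1]])
    next
      case 2
      hence re: "Re z = - d" using zK unfolding x1_def by simp
      have "k * (Re z - m) = - (pi/2)" unfolding re k_def m_def using a by (simp add: field_simps)
      hence "v z = s + d^2" unfolding v_def re x2_def using a by simp
      hence "phi z \<le> - (d^2)" unfolding phi_def using nk by linarith
      moreover have "F z < ereal (d^2)" using F1[OF zR] re d0 by simp
      ultimately show ?thesis unfolding G_def using ereal_add_lt0 by blast
    next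
      case 3
      hence re: "Re z = a - d" using zK unfolding x2_def by simp
      have "k * (Re z - m) = pi/2" unfolding re k_def m_def using a by (simp add: field_simps)
      hence cz: "cos (k * (Re z - m)) = 0" by (simp only: cos_pi_half)
      have "v z = s" unfolding v_def cz unfolding re x2_def using a by simp
      hence "phi z \<le> - 0" unfolding phi_def using nk by linarith
      moreover have "F z < ereal 0" using F1[OF zR] re d0 da by simp
      ultimately show ?thesis unfolding G_def using ereal_add_lt0 by blast
    qed
  qed
  obtain p where p: "p \<in> K" "\<And>z. z \<in> K \<Longrightarrow> G z \<le> G p"
    using usc_max[OF uscG compK KR] K0 by blast
  have Gp: "G p \<le> 0"
  proof (rule ccontr)
    assume "\<not> G p \<le> 0"
    hence Gp0: "G p > 0" by simp
    have int: "x1 < Re p" "Re p < x2" "\<bar>Im p\<bar> < b" using bd[OF p(1)] Gp0 by force+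
    define r where "r = min (min (Re p - x1) (x2 - Re p)) (b - \<bar>Im p\<bar>)"
    have r0: "r > 0" unfolding r_def using int by simp
    have ballK: "cball p r \<subseteq> K"
    proof
      fix q assume "q \<in> cball p r"
      hence "cmod (q - p) \<le> r" by (simp add: dist_norm norm_minus_commute)
      hence "\<bar>Re q - Re p\<bar> \<le> r" "\<bar>Im q - Im p\<bar> \<le> r"
        using abs_Re_le_cmod[of "q - p"] abs_Im_le_cmod[of "q - p"] by auto
      thus "q \<in> K" unfolding K_def r_def by auto
    qed
    have pR: "p \<in> R" using p(1) KR by auto
    have "F p < \<infinity>" using sub pR unfolding subharmonic_on_def by auto
    hence "G p < \<infinity>" unfolding G_def by simp
    then obtain Mr where Mr: "G p = ereal Mr" using Gp0 by (cases "G p") auto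
    have Fp: "F p = ereal (Mr - phi p)" using Mr unfolding G_def by (cases "F p") auto
    define w where "w t = Mr - phi (p + of_real r * cis t)" for t
    have le: "F (p + of_real r * cis t) \<le> ereal (w t)" for t
    proof -
      have "p + of_real r * cis t \<in> cball p r" using r0 by (simp add: dist_norm norm_mult)
      hence "G (p + of_real r * cis t) \<le> ereal Mr" using p(2) ballK Mr by auto
      thus ?thesis unfolding G_def w_def by (cases "F (p + of_real r * cis t)") auto
    qed
    have cw: "continuous_on {0..2*pi} w" unfolding w_def phi_def v_def
      by (intro continuous_intros)
    have cst: "((\<lambda>x. C) has_integral (2*pi*C)) {0..2*pi}" for C :: real
      using has_integral_const_real[of C 0 "2*pi"] by (simp add: mult.commute)
    have w_eq: "w t = Mr - eta * (cmod (p + of_real r * cis t))^2 + Re (g (p + of_real r * cis t))" for t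
      unfolding w_def phi_def vg by simp
    have W: "(w has_integral (2*pi*Mr - eta * (2*pi*((cmod p)^2 + r^2)) + 2*pi*Re (g p))) {0..2*pi}"
      unfolding w_eq[abs_def]
      by (intro has_integral_add has_integral_diff has_integral_mult_right cst
            mean_value_norm2 mean_value_Re hol r0)
    have "F p \<le> (enn2ereal (circle_pos_part F p r) - enn2ereal (circle_neg_part F p r)) / ereal (2*pi)"
      using sub r0 ballK KR unfolding subharmonic_on_def by blast
    also have "\<dots> \<le> ereal ((2*pi*Mr - eta * (2*pi*((cmod p)^2 + r^2)) + 2*pi*Re (g p)) / (2*pi))"
      by (rule avg_le[OF cw le W])
    finally have "Mr - phi p \<le> (2*pi*Mr - eta * (2*pi*((cmod p)^2 + r^2)) + 2*pi*Re (g p)) / (2*pi)"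
      unfolding Fp by simp
    also have "\<dots> = Mr - eta * ((cmod p)^2 + r^2) + Re (g p)" by (simp add: field_simps)
    finally have "eta * r^2 \<le> 0" unfolding phi_def vg by (simp add: algebra_simps)
    moreover have "eta * r^2 > 0" using eta0 r0 by simp
    ultimately show False by simp
  qed
  have main: "\<forall>z. \<bar>Im z\<bar> < b \<longrightarrow> \<bar>Re z\<bar> < d / 2 \<longrightarrow> F z < ereal (- c0 * d)"
  proof (intro allI impI)
    fix z assume zi: "\<bar>Im z\<bar> < b" and zr: "\<bar>Re z\<bar> < d / 2"
    have zK: "z \<in> K" unfolding K_def x1_def x2_def using zi zr da d0 by auto
    have "G z \<le> 0" using p(2)[OF zK] Gp by simp
    hence Fz: "F z \<le> ereal (- phi z)" unfolding G_def by (cases "F z") auto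
    have "- phi z \<le> v z" unfolding phi_def using eta0 by simp
    moreover have "v z < - c0 * d"
    proof -
      define u where "u = d / a"
      have u: "0 < u" "u \<le> 1/3" unfolding u_def using d0 a da by (auto simp: field_simps)
      define th where "th = pi * (Re z + d) / a"
      have "k * (Re z - m) = th - pi/2"
        unfolding k_def m_def th_def using a by (simp add: field_simps)
      hence cs: "cos (k * (Re z - m)) = sin th" by (simp add: cos_diff)
      have h1: "d/2 \<le> Re z + d" using zr by linarith
      have h2: "Re z + d \<le> a/2" using zr da by linarith
      have "pi * (d/2) / a \<le> pi * (Re z + d) / a"
        using h1 a by (intro divide_right_mono mult_left_mono) auto
      moreover have "pi * (d/2) / a = pi/2 * u" unfolding u_def by simp
      ultimately have th1: "pi/2 * u \<le> th" unfolding th_def by linarith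
      have "pi * (Re z + d) / a \<le> pi * (a/2) / a"
        using h2 a by (intro divide_right_mono mult_left_mono) auto
      moreover have "pi * (a/2) / a = pi/2" using a by simp
      ultimately have th2: "th \<le> pi/2" unfolding th_def by linarith
      have "sin th \<ge> sin (pi/2 * u)"
        by (rule sin_monotone_2pi_le) (use th1 th2 u pi_gt_zero in \<open>auto intro: mult_nonneg_nonneg order_trans[of _ 0]\<close>)
      hence sth: "sin th \<ge> u" using sin_lower[OF u] by linarith
      have ch1: "cosh (k * Im z) \<ge> 1" by (rule cosh_real_ge_1)
      have "A * sin th * cosh (k * Im z) \<ge> A * u * 1"
        using sth ch1 u A2 a c0 by (intro mult_mono) auto
      hence t1: "A * sin th * cosh (k * Im z) \<ge> 2 * c0 * d"
        unfolding A2 u_def using a by simp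
      have t2: "d^2/a * (x2 - Re z) < d^2 - d^3/(2*a)"
      proof -
        have "x2 - Re z < a - d/2" unfolding x2_def using zr by auto
        hence "d^2/a * (x2 - Re z) < d^2/a * (a - d/2)" using d0 a by (intro mult_strict_left_mono) auto
        also have "\<dots> = d^2 - d^3/(2*a)" using a by (simp add: field_simps power2_eq_square power3_eq_cube)
        finally show ?thesis .
      qed
      have t3: "d^2 \<le> c0 * d" using dc d0 by (simp add: power2_eq_square)
      have t4: "d^3/(2*a) = 2 * s" unfolding s_def by simp
      have "v z = - (A * sin th * cosh (k * Im z)) + s + d^2/a * (x2 - Re z)"
        unfolding v_def cs by simp
      thus ?thesis using t1 t2 t3 t4 s0 by linarith
    qed
    ultimately have "- phi z < - c0 * d" by linarith
    hence "ereal (- phi z) < ereal (- c0 * d)" by simp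
    thus "F z < ereal (- c0 * d)" using Fz by (rule le_less_trans[rotated])
  qed
  show ?thesis using main unfolding d_def c0_def ch_def .
qed

end
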